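(* Let $G=(U,V,E)$ be a path-restricted ordered bipartite graph and let $v$ be a vertex of $G$. Then the subgraph of $G$ induced by the vertex set of $T_r(v)$ has exactly $n-1$ edges, where $n$ is the number of vertices spanned by $T_r(v)$.
   Context: An ordered bipartite graph is $G=(U,V,E)$ where $U,V$ are disjoint finite sets, each carrying a strict total order (both written $<$), and $E\subseteq U\times V$. A path is a sequence of edges in which consecutive edges share a vertex. A path visiting the vertices of $U$ in the order $u_1,\dots,u_k$ and those of $V$ in the order $v_1,\dots,v_l$ is a forward path if either $u_1<\dots<u_k$ and $v_1<\dots<v_l$, or $u_1>\dots>u_k$ and $v_1>\dots>v_l$. For $x\le y$ in $U$ write $\langle x,y\rangle=\{u\in U: x\le u\le y\}$, and similarly in $V$. If $u_a<u_b$ are the smallest and largest $U$-vertices and $v_c<v_d$ the smallest and largest $V$-vertices of a forward path $P$, the range of $P$ is $\{\langle u_a,u_b\rangle,\langle v_c,v_d\rangle\}$. A vertex of $P$ is non-terminal if it is adjacent along $P$ to two vertices of $P$. An edge is a back edge to $P$ if either it is $(u_a,v_j)$ with $v_j\in\langle v_c,v_d\rangle$ and $v_j>v'$ for some non-terminal vertex $v'\in V$ of $P$, or it is $(u_i,v_c)$ with $u_i\in\langle u_a,u_b\rangle$ and $u_i>u'$ for some non-terminal vertex $u'\in U$ of $P$. $G$ is a path-restricted ordered bipartite graph (PRBG) if no forward path in $G$ has a back edge in $E$. $T_r(v)$ denotes the subgraph formed by the union of all forward paths starting at $v$ along which the orders of the visited vertices decrease (in both $U$ and $V$); its vertices are said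 to be spanned by $T_r(v)$. *)

theory Defs
  imports Main
begin

(* Ordered bipartite graph: U :: 'u set, V :: 'v set (disjoint via the sum type 'u + 'v),
   orders given by the linorder instances of 'u and 'v, edges E \<subseteq> U \<times> V. *)

definition linked :: "('u \<times> 'v) set \<Rightarrow> 'u + 'v \<Rightarrow> 'u + 'v \<Rightarrow> bool" where
  "linked E x y \<longleftrightarrow> (\<exists>u w. (u, w) \<in> E \<and> ((x = Inl u \<and> y = Inr w) \<or> (x = Inr w \<and> y = Inl u)))"

definition is_path :: "('u \<times> 'v) set \<Rightarrow> ('u + 'v) list \<Rightarrow> bool" where
  "is_path E ps \<longleftrightarrow> ps \<noteq> [] \<and> (\<forall>i. Suc i < length ps \<longrightarrow> linked E (ps ! i) (ps ! Suc i))"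

definition U_seq :: "('u + 'v) list \<Rightarrow> 'u list" where
  "U_seq ps = [u. Inl u \<leftarrow> ps]"

definition V_seq :: "('u + 'v) list \<Rightarrow> 'v list" where
  "V_seq ps = [w. Inr w \<leftarrow> ps]"

definition increasing_path :: "('u::linorder + 'v::linorder) list \<Rightarrow> bool" where
  "increasing_path ps \<longleftrightarrow> sorted_wrt (<) (U_seq ps) \<and> sorted_wrt (<) (V_seq ps)"

definition decreasing_path :: "('u::linorder + 'v::linorder) list \<Rightarrow> bool" where
  "decreasing_path ps \<longleftrightarrow> sorted_wrt (>) (U_seq ps) \<and> sorted_wrt (>) (V_seq ps)"

definition forward_path :: "('u::linorder \<times> 'v::linorder) set \<Rightarrow> ('u + 'v) list \<Rightarrow> bool" where
  "forward_path E ps \<longleftrightarrow> is_path E ps \<and> (increasing_path ps \<or> decreasing_path ps)"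

definition non_terminal :: "('u + 'v) list \<Rightarrow> 'u + 'v \<Rightarrow> bool" where
  "non_terminal ps x \<longleftrightarrow> (\<exists>i. 0 < i \<and> Suc i < length ps \<and> ps ! i = x)"

definition back_edge :: "('u::linorder + 'v::linorder) list \<Rightarrow> 'u \<times> 'v \<Rightarrow> bool" where
  "back_edge ps e \<longleftrightarrow>
     (let ua = Min (set (U_seq ps)); ub = Max (set (U_seq ps));
          vc = Min (set (V_seq ps)); vd = Max (set (V_seq ps)) in
      (fst e = ua \<and> vc \<le> snd e \<and> snd e \<le> vd \<and> (\<exists>v'. non_terminal ps (Inr v') \<and> snd e > v'))
    \<or> (snd e = vc \<and> ua \<le> fst e \<and> fst e \<le> ub \<and> (\<exists>u'. non_terminal ps (Inl u') \<and> fst e > u')))"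

definition PRBG :: "'u::linorder set \<Rightarrow> 'v::linorder set \<Rightarrow> ('u \<times> 'v) set \<Rightarrow> bool" where
  "PRBG U V E \<longleftrightarrow> finite U \<and> finite V \<and> E \<subseteq> U \<times> V \<and>
     (\<forall>ps e. forward_path E ps \<and> e \<in> E \<longrightarrow> \<not> back_edge ps e)"

definition Tr_verts :: "('u::linorder \<times> 'v::linorder) set \<Rightarrow> 'u + 'v \<Rightarrow> ('u + 'v) set" where
  "Tr_verts E v = {x. \<exists>ps. is_path E ps \<and> hd ps = v \<and> decreasing_path ps \<and> x \<in> set ps}"

definition induced_edges :: "('u \<times> 'v) set \<Rightarrow> ('u + 'v) set \<Rightarrow> ('u \<times> 'v) set" where
  "induced_edges E S = {(u, w) \<in> E. Inl u \<in> S \<and> Inr w \<in> S}"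

end

theory Submission
  imports Defs
begin

lemma U_app[simp]: "U_seq (xs @ ys) = U_seq xs @ U_seq ys" by (simp add: U_seq_def)
lemma V_app[simp]: "V_seq (xs @ ys) = V_seq xs @ V_seq ys" by (simp add: V_seq_def)
lemma U_Cons[simp]: "U_seq (Inl u # ys) = u # U_seq ys" "U_seq (Inr w # ys) = U_seq ys" "U_seq [] = []"
  by (simp_all add: U_seq_def)
lemma V_Cons[simp]: "V_seq (Inr u # ys) = u # V_seq ys" "V_seq (Inl w # ys) = V_seq ys" "V_seq [] = []"
  by (simp_all add: V_seq_def)
lemma U_rev[simp]: "U_seq (rev ys) = rev (U_seq ys)"
  by (induction ys) (auto simp add: U_seq_def split: sum.splits)
lemma V_rev[simp]: "V_seq (rev ys) = rev (V_seq ys)"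
  by (induction ys) (auto simp add: V_seq_def split: sum.splits)
lemma U_set[simp]: "(u \<in> set (U_seq ps)) = (Inl u \<in> set ps)"
  by (induction ps) (auto simp add: U_seq_def split: sum.splits)
lemma V_set[simp]: "(u \<in> set (V_seq ps)) = (Inr u \<in> set ps)"
  by (induction ps) (auto simp add: V_seq_def split: sum.splits)

fun lts :: "('a::linorder + 'b::linorder) \<Rightarrow> ('a + 'b) \<Rightarrow> bool" where
  "lts (Inl a) (Inl b) = (a < b)"
| "lts (Inr a) (Inr b) = (a < b)"
| "lts _ _ = False"

definition sside :: "('a + 'b) \<Rightarrow> ('a + 'b) \<Rightarrow> bool" where
  "sside x y \<longleftrightarrow> (isl x = isl y)"

lemma lts_sside: "lts x y \<Longrightarrow> sside x y"
  by (cases x; cases y) (auto simp: sside_def)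
lemma lts_trans: "lts x y \<Longrightarrow> lts y z \<Longrightarrow> lts x z"
  by (cases x; cases y; cases z) auto
lemma lts_asym: "lts x y \<Longrightarrow> lts y x \<Longrightarrow> False"
  by (cases x; cases y) auto
lemma lts_irrefl: "\<not> lts x x"
  by (cases x) auto
lemma lts_total: "sside x y \<Longrightarrow> x \<noteq> y \<Longrightarrow> lts x y \<or> lts y x"
  by (cases x; cases y) (auto simp: sside_def)

lemma cross_iff: "(\<forall>x\<in>set xs. \<forall>y\<in>set ys. sside x y \<longrightarrow> lts y x) \<longleftrightarrow>
   ((\<forall>a. Inl a \<in> set xs \<longrightarrow> (\<forall>b. Inl b \<in> set ys \<longrightarrow> b < a)) \<and>
    (\<forall>a. Inr a \<in> set xs \<longrightarrow> (\<forall>b. Inr b \<in> set ys \<longrightarrow> b < a)))"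
  (is "?L \<longleftrightarrow> ?R")
proof
  assume L: ?L
  show ?R
  proof (intro conjI allI impI)
    fix a b assume "Inl a \<in> set xs" "Inl b \<in> set ys"
    then show "b < a" using L by (fastforce simp: sside_def)
  next
    fix a b assume "Inr a \<in> set xs" "Inr b \<in> set ys"
    then show "b < a" using L by (fastforce simp: sside_def)
  qed
next
  assume R: ?R
  show ?L
  proof (intro ballI impI)
    fix x y assume xy: "x \<in> set xs" "y \<in> set ys" "sside x y"
    show "lts y x"
    proof (cases x)
      case (Inl a)
      then obtain b where "y = Inl b" using xy(3) by (cases y) (auto simp: sside_def)
      then show ?thesis using R xy Inl by simp
    next
      case (Inr a)
      then obtain b where "y = Inr b" using xy(3) by (cases y) (auto simp: sside_def)
      then show ?thesis using R xy Inr by simp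
    qed
  qed
qed

lemma dec_append: "decreasing_path (xs @ ys) \<longleftrightarrow> decreasing_path xs \<and> decreasing_path ys \<and>
   (\<forall>x\<in>set xs. \<forall>y\<in>set ys. sside x y \<longrightarrow> lts y x)"
  unfolding cross_iff decreasing_path_def by (simp add: sorted_wrt_append Ball_def) blast

lemma inc_rev: "increasing_path (rev ps) \<longleftrightarrow> decreasing_path ps"
  unfolding decreasing_path_def increasing_path_def by (simp add: sorted_wrt_rev)

lemma dec_single[simp]: "decreasing_path [x]"
  unfolding decreasing_path_def by (cases x) auto

lemma linked_sym: "linked E x y \<Longrightarrow> linked E y x"
  unfolding linked_def by blast
lemma linked_not_sside: "linked E x y \<Longrightarrow> \<not> sside x y"
  unfolding linked_def sside_def by auto
lemma sside_trans: "sside x y \<Longrightarrow> sside y z \<Longrightarrow> sside x z"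
  unfolding sside_def by simp
lemma sside_sym: "sside x y \<Longrightarrow> sside y x"
  unfolding sside_def by simp
lemma sside_refl: "sside x x"
  unfolding sside_def by simp
lemma not_sside_trans: "\<not> sside x y \<Longrightarrow> \<not> sside y z \<Longrightarrow> sside x z"
  unfolding sside_def by simp

lemma is_path_snoc:
  assumes "ps \<noteq> []"
  shows "is_path E (ps @ [z]) \<longleftrightarrow> is_path E ps \<and> linked E (last ps) z"
proof
  assume h: "is_path E (ps @ [z])"
  have "is_path E ps" unfolding is_path_def
  proof (intro conjI allI impI)
    show "ps \<noteq> []" by fact
    fix i assume "Suc i < length ps"
    with h have "linked E ((ps@[z]) ! i) ((ps@[z]) ! Suc i)" unfolding is_path_def by auto
    then show "linked E (ps ! i) (ps ! Suc i)" using \<open>Suc i < length ps\<close> by (simp add: nth_append)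
  qed
  moreover have "linked E (last ps) z"
  proof -
    from assms obtain n where n: "length ps = Suc n" by (cases ps) auto
    with h have "linked E ((ps@[z]) ! n) ((ps@[z]) ! Suc n)" unfolding is_path_def by auto
    then show ?thesis using n assms by (simp add: nth_append last_conv_nth)
  qed
  ultimately show "is_path E ps \<and> linked E (last ps) z" by blast
next
  assume h: "is_path E ps \<and> linked E (last ps) z"
  show "is_path E (ps @ [z])" unfolding is_path_def
  proof (intro conjI allI impI)
    show "ps @ [z] \<noteq> []" by simp
    fix i assume i: "Suc i < length (ps @ [z])"
    show "linked E ((ps @ [z]) ! i) ((ps @ [z]) ! Suc i)"
    proof (cases "Suc i < length ps")
      case True
      then show ?thesis using h by (simp add: nth_append is_path_def)
    next
      case False
      then have "Suc i = length ps" using i by simp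
      then have "i = length ps - 1" "\<not> Suc i < length ps" by simp_all
      then show ?thesis using h assms by (simp add: nth_append last_conv_nth)
    qed
  qed
qed

lemma is_path_rev: "is_path E (rev ps) \<longleftrightarrow> is_path E ps"
proof -
  have *: "is_path E (rev ps)" if "is_path E ps" for ps :: "('a + 'b) list"
    unfolding is_path_def
  proof (intro conjI allI impI)
    show "rev ps \<noteq> []" using that by (simp add: is_path_def)
    fix i assume i: "Suc i < length (rev ps)"
    let ?j = "length ps - Suc (Suc i)"
    have "Suc ?j < length ps" using i by simp
    then have "linked E (ps ! ?j) (ps ! Suc ?j)" using that by (simp add: is_path_def)
    moreover have "rev ps ! i = ps ! Suc ?j" "rev ps ! Suc i = ps ! ?j"
      using i by (simp_all add: rev_nth Suc_diff_Suc)
    ultimately show "linked E (rev ps ! i) (rev ps ! Suc i)" by (simp add: linked_sym)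
  qed
  show ?thesis using *[of ps] *[of "rev ps"] by auto
qed

lemma is_path_take: "is_path E ps \<Longrightarrow> 0 < k \<Longrightarrow> is_path E (take k ps)"
  unfolding is_path_def by auto

lemma is_path_appendD: "is_path E (xs @ ys) \<Longrightarrow> xs \<noteq> [] \<Longrightarrow> is_path E xs"
  using is_path_take[of E "xs @ ys" "length xs"] by simp

lemma dec_hd:
  assumes "decreasing_path ps" "x \<in> set ps" "sside (hd ps) x"
  shows "x = hd ps \<or> lts x (hd ps)"
proof -
  obtain h t where ps: "ps = h # t" using assms(2) by (cases ps) auto
  show ?thesis
  proof (cases "x = h")
    case True then show ?thesis using ps by simp
  next
    case False
    then have "x \<in> set t" using assms(2) ps by simp
    moreover have "sside h x" using assms(3) ps by simp
    moreover have "\<forall>x\<in>set [h]. \<forall>y\<in>set t. sside x y \<longrightarrow> lts y x"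
      using assms(1) ps dec_append[of "[h]" t] by simp
    ultimately show ?thesis using ps by simp
  qed
qed

lemma dec_last:
  assumes "decreasing_path ps" "x \<in> set ps" "sside (last ps) x"
  shows "x = last ps \<or> lts (last ps) x"
proof -
  obtain xs l where ps: "ps = xs @ [l]" using assms(2) by (cases ps rule: rev_cases) auto
  show ?thesis
  proof (cases "x = l")
    case True then show ?thesis using ps by simp
  next
    case False
    then have "x \<in> set xs" using assms(2) ps by simp
    moreover have "sside x l" using assms(3) ps sside_sym by simp
    moreover have "\<forall>x\<in>set xs. \<forall>y\<in>set [l]. sside x y \<longrightarrow> lts y x"
      using assms(1) ps dec_append[of xs "[l]"] by simp
    ultimately show ?thesis using ps by simp
  qed
qed

lemma dec_appendD1: "decreasing_path (xs @ ys) \<Longrightarrow> decreasing_path xs"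
  using dec_append by blast

lemma BE:
  assumes prbg: "PRBG U V E" and p: "is_path E F" and inc: "increasing_path F" and len: "3 \<le> length F"
    and lk: "linked E (F!0) z" and ss: "sside (F!1) z" and lt: "lts (F!1) z"
    and z': "z' \<in> set F" "sside z z'" "z = z' \<or> lts z z'"
  shows False
proof -
  obtain a b rest where F: "F = a # b # rest" using len
    by (metis Suc_le_length_iff numeral_3_eq_3 Suc_leD)
  have fw: "forward_path E F" using p inc by (simp add: forward_path_def)
  have nt: "non_terminal F b" unfolding non_terminal_def
    by (rule exI[of _ 1]) (use len F in auto)
  show False
  proof (cases a)
    case (Inl s)
    from lk F Inl obtain w where zw: "z = Inr w" and e: "(s, w) \<in> E"
      unfolding linked_def by auto
    from ss zw obtain t where bt: "b = Inr t" by (cases b) (auto simp: sside_def F)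
    from lt zw bt F have tw: "t < w" by simp
    from z'(2,3) zw obtain w' where zw': "z' = Inr w'" and ww': "w \<le> w'"
      by (cases z') (auto simp: sside_def)
    have sU: "sorted_wrt (<) (U_seq F)" "sorted_wrt (<) (V_seq F)"
      using inc by (auto simp: increasing_path_def)
    have minU: "Min (set (U_seq F)) = s"
      using sU(1) by (intro Min_eqI) (auto simp: F Inl bt less_imp_le)
    have minV: "Min (set (V_seq F)) = t"
      using sU(2) by (intro Min_eqI) (auto simp: F Inl bt less_imp_le)
    have "w' \<in> set (V_seq F)" using z' zw' by simp
    then have "w' \<le> Max (set (V_seq F))" by (intro Max_ge) auto
    then have be: "back_edge F (s, w)"
      unfolding back_edge_def Let_def using minU minV tw ww' nt bt by auto
    then show False using prbg fw e unfolding PRBG_def by blast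
  next
    case (Inr s)
    from lk F Inr obtain w where zw: "z = Inl w" and e: "(w, s) \<in> E"
      unfolding linked_def by auto
    from ss zw obtain t where bt: "b = Inl t" by (cases b) (auto simp: sside_def F)
    from lt zw bt F have tw: "t < w" by simp
    from z'(2,3) zw obtain w' where zw': "z' = Inl w'" and ww': "w \<le> w'"
      by (cases z') (auto simp: sside_def)
    have sU: "sorted_wrt (<) (U_seq F)" "sorted_wrt (<) (V_seq F)"
      using inc by (auto simp: increasing_path_def)
    have minU: "Min (set (U_seq F)) = t"
      using sU(1) by (intro Min_eqI) (auto simp: F Inr bt less_imp_le)
    have minV: "Min (set (V_seq F)) = s"
      using sU(2) by (intro Min_eqI) (auto simp: F Inr bt less_imp_le)
    have "w' \<in> set (U_seq F)" using z' zw' by simp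
    then have "w' \<le> Max (set (U_seq F))" by (intro Max_ge) auto
    then have be: "back_edge F (w, s)"
      unfolding back_edge_def Let_def using minU minV tw ww' nt bt by auto
    then show False using prbg fw e unfolding PRBG_def by blast
  qed
qed

lemma A_core:
  assumes prbg: "PRBG U V E"
    and pP: "is_path E (P' @ [x])" and dP: "decreasing_path (P' @ [x])"
    and pQ: "is_path E (Q' @ [x])" and dQ: "decreasing_path (Q' @ [x])"
    and hd: "hd P' = hd Q'" and ne: "P' \<noteq> []" "Q' \<noteq> []"
    and lt: "lts (last Q') (last P')"
  shows False
proof -
  define a where "a = last P'"
  define b where "b = last Q'"
  define y where "y = hd P'"
  have la: "linked E a x" using pP ne is_path_snoc a_def by blast
  have lb: "linked E b x" using pQ ne is_path_snoc b_def by blast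
  have pP': "is_path E P'" using pP ne is_path_snoc by blast
  have dP': "decreasing_path P'" using dP dec_appendD1 by blast
  have pQ': "is_path E Q'" using pQ ne is_path_snoc by blast
  have dQ': "decreasing_path Q'" using dQ dec_appendD1 by blast
  have ltba: "lts b a" using lt a_def b_def by simp
  have ssab: "sside a b" using lts_sside[OF ltba] sside_sym by blast
  have aP: "a \<in> set P'" using ne a_def by simp
  have yP: "y \<in> set P'" using ne y_def by simp
  have yQ: "y \<in> set Q'" using ne y_def hd by simp
  obtain Q0 where Q0: "Q' = Q0 @ [b]" using ne b_def by (cases Q' rule: rev_cases) auto
  have Q0ne: "Q0 \<noteq> []"
  proof
    assume "Q0 = []"
    then have "b = y" using Q0 hd y_def by simp
    then have "sside (hd P') a" using ssab y_def sside_sym by blast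
    then have "a = y \<or> lts a y" using dec_hd[OF dP' aP] y_def by blast
    then show False using ltba \<open>b = y\<close> lts_irrefl lts_asym by metis
  qed
  show False
  proof (cases "sside y a")
    case True
    define F where "F = rev (Q' @ [x])"
    have F: "F = x # b # rev Q0" using F_def Q0 by simp
    have "is_path E F" using pQ F_def is_path_rev by blast
    moreover have "increasing_path F" using dQ F_def inc_rev by blast
    moreover have "3 \<le> length F" using F Q0ne by (cases Q0) auto
    moreover have "linked E (F!0) a" using F la linked_sym by simp
    moreover have "sside (F!1) a" "lts (F!1) a" using F ltba lts_sside by simp_all
    moreover have "y \<in> set F" using F_def yQ by simp
    moreover have "sside a y" using True sside_sym by blast
    moreover have "a = y \<or> lts a y" using dec_hd[OF dP' aP] True y_def by blast
    ultimately show False using BE[OF prbg] by blast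
  next
    case False
    define c where "c = last Q0"
    have pQ0: "is_path E (Q0 @ [b])" using pQ' Q0 by simp
    have lcb: "linked E c b" using pQ0 Q0ne is_path_snoc c_def by blast
    have cQ0: "c \<in> set Q0" using Q0ne c_def by simp
    have pPb: "is_path E ((P' @ [x]) @ [b])"
      using is_path_snoc[of "P' @ [x]" E b] pP linked_sym[OF lb] by simp
    have dPb: "decreasing_path ((P' @ [x]) @ [b])"
    proof -
      have "lts b z" if z: "z \<in> set (P' @ [x])" "sside z b" for z
      proof (cases "z = x")
        case True
        then show ?thesis using z(2) lb linked_not_sside sside_sym by blast
      next
        case False
        then have "z \<in> set P'" using z(1) by simp
        moreover have "sside (last P') z" using z(2) ssab a_def sside_sym sside_trans by metis
        ultimately have "z = a \<or> lts a z" using dec_last[OF dP'] a_def by blast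
        then show ?thesis using ltba lts_trans by blast
      qed
      then show ?thesis using dP dec_append[of "P' @ [x]" "[b]"] by auto
    qed
    define F where "F = rev ((P' @ [x]) @ [b])"
    have F: "F = b # x # rev P'" using F_def by simp
    have "is_path E F" using pPb F_def is_path_rev by blast
    moreover have "increasing_path F" using dPb F_def inc_rev by blast
    moreover have "3 \<le> length F" using F ne by (cases P') auto
    moreover have "linked E (F!0) c" using F lcb linked_sym by simp
    moreover have "sside (F!1) c" "lts (F!1) c"
    proof -
      have ssxc: "sside x c"
        using lb lcb linked_not_sside not_sside_trans sside_sym by metis
      have "decreasing_path (Q0 @ [b, x])" using dQ Q0 by simp
      then have "\<forall>z\<in>set Q0. \<forall>y\<in>set [b, x]. sside z y \<longrightarrow> lts y z"
        using dec_append[of Q0 "[b, x]"] by simp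
      then have "lts x c" using cQ0 ssxc sside_sym by auto
      then show "sside (F!1) c" "lts (F!1) c" using F ssxc by simp_all
    qed
    moreover have "y \<in> set F" using F yP by simp
    moreover have ssyc: "sside c y"
    proof -
      have "\<not> sside y b" using False ssab unfolding sside_def by simp
      moreover have "\<not> sside b c" using lcb linked_not_sside sside_sym by blast
      ultimately show ?thesis unfolding sside_def by simp
    qed
    moreover have "c = y \<or> lts c y"
      using dec_hd[OF dQ', of c] cQ0 Q0 ssyc sside_sym hd y_def by auto
    ultimately show False by (rule BE[OF prbg])
  qed
qed

lemma dec_hd_last_single:
  assumes "decreasing_path (Q' @ [x])" "Q' \<noteq> []" "hd Q' = x"
  shows False
proof -
  have "x \<in> set Q'" using assms(2,3) by (cases Q') auto
  moreover have "\<forall>z\<in>set Q'. \<forall>y\<in>set [x]. sside z y \<longrightarrow> lts y z"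
    using assms(1) dec_append[of Q' "[x]"] by simp
  ultimately have "lts x x" using sside_refl by auto
  then show False using lts_irrefl by blast
qed

lemma uniqA:
  assumes prbg: "PRBG U V E"
  shows "is_path E P \<Longrightarrow> decreasing_path P \<Longrightarrow> is_path E Q \<Longrightarrow> decreasing_path Q
         \<Longrightarrow> hd P = hd Q \<Longrightarrow> last P = last Q \<Longrightarrow> P = Q"
proof (induction P arbitrary: Q rule: rev_induct)
  case Nil
  then show ?case by (simp add: is_path_def)
next
  case (snoc x P')
  have "Q \<noteq> []" using snoc.prems(3) by (simp add: is_path_def)
  then obtain Q' z where Qz: "Q = Q' @ [z]" by (cases Q rule: rev_cases) simp_all
  have "z = x" using snoc.prems(6) Qz by simp
  then have Q: "Q = Q' @ [x]" using Qz by simp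
  show ?case
  proof (cases "P' = []")
    case True
    show ?thesis
    proof (cases "Q' = []")
      case True2: True
      then show ?thesis using True Q by simp
    next
      case False
      have "hd Q' = x" using snoc.prems(5) True Q False by simp
      then show ?thesis using dec_hd_last_single[of Q' x] snoc.prems(4) Q False by simp
    qed
  next
    case Pne: False
    show ?thesis
    proof (cases "Q' = []")
      case True
      have "hd P' = x" using snoc.prems(5) True Q Pne by simp
      then show ?thesis using dec_hd_last_single[of P' x] snoc.prems(2) Pne by simp
    next
      case Qne: False
      have hd: "hd P' = hd Q'" using snoc.prems(5) Q Pne Qne by simp
      show ?thesis
      proof (cases "last P' = last Q'")
        case True
        have "is_path E P'" using snoc.prems(1) Pne is_path_snoc by blast
        moreover have "is_path E Q'" using snoc.prems(3) Q Qne is_path_snoc by blast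
        moreover have "decreasing_path P'" using snoc.prems(2) dec_appendD1 by blast
        moreover have "decreasing_path Q'" using snoc.prems(4) Q dec_appendD1 by blast
        ultimately have "P' = Q'" using snoc.IH hd True by blast
        then show ?thesis using Q by simp
      next
        case False
        have "linked E (last P') x" using snoc.prems(1) Pne is_path_snoc by blast
        moreover have "linked E (last Q') x" using snoc.prems(3) Q Qne is_path_snoc by blast
        ultimately have "sside (last P') (last Q')"
          using linked_not_sside not_sside_trans sside_sym by metis
        then have "lts (last P') (last Q') \<or> lts (last Q') (last P')" using lts_total False by blast
        then show ?thesis
        proof
          assume "lts (last P') (last Q')"
          then show ?thesis using A_core[OF prbg, of Q' x P'] snoc.prems Q hd Pne Qne by auto
        next
          assume "lts (last Q') (last P')"
          then show ?thesis using A_core[OF prbg, of P' x Q'] snoc.prems Q hd Pne Qne by auto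
        qed
      qed
    qed
  qed
qed

lemma B_core:
  assumes prbg: "PRBG U V E"
    and pA: "is_path E Pa" and dA: "decreasing_path Pa"
    and pB: "is_path E Pb" and dB: "decreasing_path Pb"
    and hA: "hd Pa = v" and hB: "hd Pb = v" and lA: "last Pa = a" and lB: "last Pb = b"
    and lab: "linked E a b" and ssva: "sside v a"
    and ndA: "\<not> decreasing_path (Pb @ [a])" and ndB: "\<not> decreasing_path (Pa @ [b])"
  shows False
proof -
  obtain z2 where z2: "z2 \<in> set Pb" "sside z2 a" "\<not> lts a z2"
    using ndA dB dec_append[of Pb "[a]"] by auto
  have PbNe: "Pb \<noteq> []" using pB by (simp add: is_path_def)
  obtain Pb0 where Pb0: "Pb = Pb0 @ [b]" using PbNe lB by (cases Pb rule: rev_cases) auto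
  have "z2 \<noteq> b" using z2(2) linked_not_sside[OF lab] unfolding sside_def by auto
  then have z2P: "z2 \<in> set Pb0" using z2(1) Pb0 by simp
  then have P0ne: "Pb0 \<noteq> []" by auto
  define d where "d = last Pb0"
  have pB0: "is_path E Pb0" using pB Pb0 P0ne is_path_snoc by blast
  have dB0: "decreasing_path Pb0" using dB Pb0 dec_appendD1 by blast
  have hB0: "hd Pb0 = v" using hB Pb0 P0ne by simp
  have ldb: "linked E d b" using pB Pb0 P0ne is_path_snoc d_def by blast
  have ssda: "sside d a"
    using ldb lab linked_not_sside not_sside_trans sside_sym by metis
  have "z2 = d \<or> lts d z2" using dec_last[OF dB0 z2P] ssda z2(2) d_def sside_sym sside_trans by metis
  moreover have "z2 = a \<or> lts z2 a" using z2(2,3) lts_total by blast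
  ultimately have "d = a \<or> lts d a" using lts_trans by blast
  then show False
  proof
    assume "d = a"
    then have "Pb0 = Pa" using uniqA[OF prbg pB0 dB0 pA dA] hB0 hA lA d_def by simp
    then show False using ndB dB Pb0 by simp
  next
    assume lt: "lts d a"
    have aPa: "a \<in> set Pa" using lA pA by (auto simp: is_path_def)
    have av: "a = v \<or> lts a v" using dec_hd[OF dA aPa] hA ssva by blast
    have "Pb0 \<noteq> [d]"
    proof
      assume "Pb0 = [d]"
      then have "d = v" using hB0 by simp
      then show False using lt av lts_irrefl lts_asym by metis
    qed
    then obtain Pb1 where Pb1: "Pb0 = Pb1 @ [d]" "Pb1 \<noteq> []" using P0ne d_def
      by (cases Pb0 rule: rev_cases) auto
    define F where "F = rev Pb"
    have F: "F = b # d # rev Pb1" using F_def Pb0 Pb1 by simp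
    have "is_path E F" using pB F_def is_path_rev by blast
    moreover have "increasing_path F" using dB F_def inc_rev by blast
    moreover have "3 \<le> length F" using F Pb1 by (cases Pb1) auto
    moreover have "linked E (F!0) a" using F lab linked_sym by simp
    moreover have "sside (F!1) a" "lts (F!1) a" using F ssda lt by simp_all
    moreover have "v \<in> set F" using F_def hB PbNe hd_in_set by fastforce
    moreover have "sside a v" using ssva sside_sym by blast
    ultimately show False using BE[OF prbg] av by blast
  qed
qed

lemma claimB:
  assumes prbg: "PRBG U V E"
    and pA: "is_path E Pa" and dA: "decreasing_path Pa"
    and pB: "is_path E Pb" and dB: "decreasing_path Pb"
    and hA: "hd Pa = v" and hB: "hd Pb = v" and lA: "last Pa = a" and lB: "last Pb = b"
    and lab: "linked E a b"
  shows "Pb = Pa @ [b] \<or> Pa = Pb @ [a]"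
proof (cases "decreasing_path (Pa @ [b])")
  case True
  have "Pa \<noteq> []" using pA by (simp add: is_path_def)
  then have "is_path E (Pa @ [b])" using pA lab lA is_path_snoc by blast
  then have "Pa @ [b] = Pb" using uniqA[OF prbg _ True pB dB] hA hB lB \<open>Pa \<noteq> []\<close> by simp
  then show ?thesis by simp
next
  case nA: False
  show ?thesis
  proof (cases "decreasing_path (Pb @ [a])")
    case True
    have "Pb \<noteq> []" using pB by (simp add: is_path_def)
    then have "is_path E (Pb @ [a])" using pB lab lB is_path_snoc linked_sym by blast
    then have "Pb @ [a] = Pa" using uniqA[OF prbg _ True pA dA] hA hB lA \<open>Pb \<noteq> []\<close> by simp
    then show ?thesis by simp
  next
    case nB: False
    show ?thesis
    proof (cases "sside v a")
      case True
      then show ?thesis using B_core[OF prbg pA dA pB dB hA hB lA lB lab True nB nA] by blast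
    next
      case False
      then have "sside v b" using lab linked_not_sside not_sside_trans by blast
      then show ?thesis using B_core[OF prbg pB dB pA dA hB hA lB lA linked_sym[OF lab] _ nA nB] by blast
    qed
  qed
qed


lemma prefix_path:
  assumes "is_path E ps" "decreasing_path ps" "hd ps = v" "x \<in> set ps"
  shows "\<exists>q. is_path E q \<and> decreasing_path q \<and> hd q = v \<and> last q = x"
proof -
  obtain i where i: "i < length ps" "ps ! i = x" using assms(4) by (auto simp: in_set_conv_nth)
  define q where "q = take (Suc i) ps"
  have q: "q = take i ps @ [x]" using i q_def by (simp add: take_Suc_conv_app_nth)
  have "is_path E q" using is_path_take[OF assms(1)] q_def by simp
  moreover have "decreasing_path q"
    using assms(2) dec_appendD1[of q "drop (Suc i) ps"] q_def by simp
  moreover have "hd q = v" using assms(3) q_def i by (cases ps) auto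
  moreover have "last q = x" using q by simp
  ultimately show ?thesis by blast
qed

lemma linked_mem: "linked E y x \<Longrightarrow> E \<subseteq> U \<times> V \<Longrightarrow> x \<in> Inl ` U \<union> Inr ` V"
  unfolding linked_def by auto

theorem lemma5:
  fixes U :: "'u::linorder set" and V :: "'v::linorder set" and E :: "('u \<times> 'v) set"
    and v :: "'u + 'v"
  assumes "PRBG U V E"
    and "v \<in> Inl ` U \<union> Inr ` V"
  shows "card (induced_edges E (Tr_verts E v)) = card (Tr_verts E v) - 1"
proof -
  note prbg = assms(1)
  have EUV: "E \<subseteq> U \<times> V" and fin: "finite U" "finite V" using prbg by (auto simp: PRBG_def)
  define T where "T = Tr_verts E v"
  define IE where "IE = induced_edges E T"
  define good where "good x q \<longleftrightarrow> is_path E q \<and> decreasing_path q \<and> hd q = v \<and> last q = x" for x q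
  define pth where "pth x = (THE q. good x q)" for x
  have uniq: "q1 = q2" if "good x q1" "good x q2" for x q1 q2
    using that uniqA[OF prbg] unfolding good_def by metis
  have memT: "x \<in> T \<longleftrightarrow> (\<exists>q. good x q)" for x
  proof
    assume "x \<in> T"
    then obtain ps where "is_path E ps" "hd ps = v" "decreasing_path ps" "x \<in> set ps"
      unfolding T_def Tr_verts_def by blast
    then show "\<exists>q. good x q" using prefix_path unfolding good_def by metis
  next
    assume "\<exists>q. good x q"
    then obtain q where "good x q" by blast
    then have "q \<noteq> []" unfolding good_def is_path_def by simp
    then show "x \<in> T" using \<open>good x q\<close> unfolding T_def Tr_verts_def good_def by auto
  qed
  have pth_good: "good x (pth x)" if "x \<in> T" for x
    unfolding pth_def using memT[of x] that uniq by (metis theI)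
  have pth_eq: "pth x = q" if "good x q" for x q
    using pth_good[of x] memT[of x] that uniq by blast
  have goodv: "good v [v]" unfolding good_def is_path_def by simp
  have vT: "v \<in> T" using memT goodv by blast
  have pthv: "pth v = [v]" using pth_eq goodv by blast
  have decomp: "\<exists>q0. pth x = q0 @ [x] \<and> q0 \<noteq> [] \<and> good (last q0) q0 \<and> linked E (last q0) x"
    if "x \<in> T" "x \<noteq> v" for x
  proof -
    have g: "good x (pth x)" using pth_good that by blast
    then have ne: "pth x \<noteq> []" unfolding good_def is_path_def by simp
    then obtain q0 where q0: "pth x = q0 @ [x]" using g unfolding good_def
      by (cases "pth x" rule: rev_cases) auto
    have "q0 \<noteq> []" using q0 g that(2) unfolding good_def by auto
    moreover have pq: "is_path E (q0 @ [x])" "decreasing_path (q0 @ [x])" "hd (q0 @ [x]) = v"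
      using g q0 unfolding good_def by auto
    moreover have "good (last q0) q0"
    proof -
      have "is_path E q0" using pq(1) \<open>q0 \<noteq> []\<close> is_path_snoc by blast
      moreover have "decreasing_path q0" using pq(2) dec_appendD1 by blast
      moreover have "hd q0 = v" using pq(3) \<open>q0 \<noteq> []\<close> by simp
      ultimately show ?thesis unfolding good_def by simp
    qed
    moreover have "linked E (last q0) x"
      using pq(1) \<open>q0 \<noteq> []\<close> is_path_snoc by blast
    ultimately show ?thesis using q0 by blast
  qed
  have finT: "finite T"
  proof (rule finite_subset)
    show "T \<subseteq> Inl ` U \<union> Inr ` V"
    proof
      fix x assume "x \<in> T"
      show "x \<in> Inl ` U \<union> Inr ` V"
      proof (cases "x = v")
        case True then show ?thesis using assms(2) by simp
      next
        case False
        then show ?thesis using decomp[OF \<open>x \<in> T\<close> False] linked_mem[OF _ EUV] by blast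
      qed
    qed
    show "finite (Inl ` U \<union> Inr ` V)" using fin by simp
  qed
  define child where "child e = (if length (pth (Inl (fst e))) < length (pth (Inr (snd e)))
      then Inr (snd e) else Inl (fst e))" for e :: "'u \<times> 'v"
  have K: "(child e = Inr (snd e) \<and> pth (Inr (snd e)) = pth (Inl (fst e)) @ [Inr (snd e)])
         \<or> (child e = Inl (fst e) \<and> pth (Inl (fst e)) = pth (Inr (snd e)) @ [Inl (fst e)])"
    if "e \<in> IE" for e
  proof -
    obtain u w where e: "e = (u, w)" by (cases e)
    have uT: "Inl u \<in> T" and wT: "Inr w \<in> T" and ue: "(u, w) \<in> E"
      using that e unfolding IE_def induced_edges_def by auto
    have lk: "linked E (Inl u) (Inr w)" using ue unfolding linked_def by blast
    have "pth (Inr w) = pth (Inl u) @ [Inr w] \<or> pth (Inl u) = pth (Inr w) @ [Inl u]"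
      using claimB[OF prbg, of "pth (Inl u)" "pth (Inr w)" v "Inl u" "Inr w"]
        pth_good[OF uT] pth_good[OF wT] lk unfolding good_def by blast
    then show ?thesis unfolding child_def e by auto
  qed
  have bij: "bij_betw child IE (T - {v})"
  proof (rule bij_betw_imageI)
    show "inj_on child IE"
    proof (rule inj_onI)
      fix e1 e2 assume e1: "e1 \<in> IE" and e2: "e2 \<in> IE" and eq: "child e1 = child e2"
      obtain u1 w1 where E1: "e1 = (u1, w1)" by (cases e1)
      obtain u2 w2 where E2: "e2 = (u2, w2)" by (cases e2)
      have L: "last (pth (Inl u1)) = Inl u1" "last (pth (Inl u2)) = Inl u2"
        "last (pth (Inr w1)) = Inr w1" "last (pth (Inr w2)) = Inr w2"
      proof -
        have m: "Inl u1 \<in> T" "Inr w1 \<in> T" "Inl u2 \<in> T" "Inr w2 \<in> T"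
          using e1 e2 E1 E2 unfolding IE_def induced_edges_def by auto
        show "last (pth (Inl u1)) = Inl u1" "last (pth (Inl u2)) = Inl u2"
          "last (pth (Inr w1)) = Inr w1" "last (pth (Inr w2)) = Inr w2"
          using pth_good[OF m(1)] pth_good[OF m(2)] pth_good[OF m(3)] pth_good[OF m(4)]
          unfolding good_def by simp_all
      qed
      have K1: "(child e1 = Inr w1 \<and> pth (Inr w1) = pth (Inl u1) @ [Inr w1]) \<or>
                (child e1 = Inl u1 \<and> pth (Inl u1) = pth (Inr w1) @ [Inl u1])"
        using K[OF e1] E1 by simp
      have K2: "(child e2 = Inr w2 \<and> pth (Inr w2) = pth (Inl u2) @ [Inr w2]) \<or>
                (child e2 = Inl u2 \<and> pth (Inl u2) = pth (Inr w2) @ [Inl u2])"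
        using K[OF e2] E2 by simp
      from K1 show "e1 = e2"
      proof (elim disjE conjE)
        assume c1: "child e1 = Inr w1" and p1: "pth (Inr w1) = pth (Inl u1) @ [Inr w1]"
        from K2 show ?thesis
        proof (elim disjE conjE)
          assume c2: "child e2 = Inr w2" and p2: "pth (Inr w2) = pth (Inl u2) @ [Inr w2]"
          have "w1 = w2" using c1 c2 eq by simp
          then have "pth (Inl u1) = pth (Inl u2)" using p1 p2 by simp
          then have "u1 = u2" using L(1,2) by (metis sum.inject(1))
          then show ?thesis using E1 E2 \<open>w1 = w2\<close> by simp
        next
          assume c2: "child e2 = Inl u2"
          then show ?thesis using c1 eq by simp
        qed
      next
        assume c1: "child e1 = Inl u1" and p1: "pth (Inl u1) = pth (Inr w1) @ [Inl u1]"
        from K2 show ?thesis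
        proof (elim disjE conjE)
          assume c2: "child e2 = Inr w2"
          then show ?thesis using c1 eq by simp
        next
          assume c2: "child e2 = Inl u2" and p2: "pth (Inl u2) = pth (Inr w2) @ [Inl u2]"
          have "u1 = u2" using c1 c2 eq by simp
          then have "pth (Inr w1) = pth (Inr w2)" using p1 p2 by simp
          then have "w1 = w2" using L(3,4) by (metis sum.inject(2))
          then show ?thesis using E1 E2 \<open>u1 = u2\<close> by simp
        qed
      qed
    qed
    show "child ` IE = T - {v}"
    proof
      show "child ` IE \<subseteq> T - {v}"
      proof
        fix x assume "x \<in> child ` IE"
        then obtain e where e: "e \<in> IE" "x = child e" by blast
        have uT: "Inl (fst e) \<in> T" and wT: "Inr (snd e) \<in> T"
          using e unfolding IE_def induced_edges_def by auto
        have ne1: "pth (Inl (fst e)) \<noteq> []" "pth (Inr (snd e)) \<noteq> []"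
          using pth_good[OF uT] pth_good[OF wT] unfolding good_def is_path_def by simp_all
        have "x \<in> T \<and> (\<exists>q. pth x = q @ [x] \<and> q \<noteq> [])"
          using K[OF e(1)]
        proof (elim disjE conjE)
          assume "child e = Inr (snd e)" "pth (Inr (snd e)) = pth (Inl (fst e)) @ [Inr (snd e)]"
          then show ?thesis using e(2) wT ne1
            by (intro conjI exI[of _ "pth (Inl (fst e))"]) simp_all
        next
          assume "child e = Inl (fst e)" "pth (Inl (fst e)) = pth (Inr (snd e)) @ [Inl (fst e)]"
          then show ?thesis using e(2) uT ne1
            by (intro conjI exI[of _ "pth (Inr (snd e))"]) simp_all
        qed
        then have xT: "x \<in> T" and "\<exists>q. pth x = q @ [x] \<and> q \<noteq> []" by blast+
        then have "x \<noteq> v" using pthv by auto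
        then show "x \<in> T - {v}" using xT by blast
      qed
    next
      show "T - {v} \<subseteq> child ` IE"
      proof
        fix x assume x: "x \<in> T - {v}"
        obtain q0 where q0: "pth x = q0 @ [x]" "q0 \<noteq> []" "good (last q0) q0" "linked E (last q0) x"
          using decomp x by blast
        define y where "y = last q0"
        have py: "pth y = q0" using pth_eq q0(3) y_def by blast
        have yT: "y \<in> T" using memT q0(3) y_def by blast
        have xT: "x \<in> T" using x by blast
        show "x \<in> child ` IE"
        proof (cases x)
          case (Inl u)
          then obtain w where yw: "y = Inr w" and ue: "(u, w) \<in> E"
            using q0(4) y_def unfolding linked_def by auto
          have "(u, w) \<in> IE" using ue xT yT Inl yw unfolding IE_def induced_edges_def by auto
          moreover have "child (u, w) = x"
            using q0(1) py Inl yw unfolding child_def by auto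
          ultimately show ?thesis by force
        next
          case (Inr w)
          then obtain u where yu: "y = Inl u" and ue: "(u, w) \<in> E"
            using q0(4) y_def unfolding linked_def by auto
          have "(u, w) \<in> IE" using ue xT yT Inr yu unfolding IE_def induced_edges_def by auto
          moreover have "child (u, w) = x"
            using q0(1) py Inr yu unfolding child_def by auto
          ultimately show ?thesis by force
        qed
      qed
    qed
  qed
  have "card IE = card (T - {v})" using bij_betw_same_card[OF bij] .
  also have "\<dots> = card T - 1" using vT finT by simp
  finally show ?thesis unfolding IE_def T_def .
qed

end
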